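(* Let $K$ be a Cantor set, let $T:K\to K$ be a homeomorphism, and let $K_1,\dots,K_N$ be pairwise disjoint Cantor sets with $K=\bigcup_{i=1}^N K_i$. Suppose that for every $1\le i\le N$ at least one of the following holds: (i) for every $y\in K_i$, $T^{-1}(y)\in K_i$; (ii) for every $x\in K_i$, $T(x)\in K_i$. Then there exists a homeomorphism $\widetilde T:K\to K$ such that for every $x\in K$ and every $i$, $\widetilde T(x)\in K_i$ if and only if $T(x)\in K_i$, and every orbit of $\widetilde T$ converges to a fixed point of $\widetilde T$.
   Context: A Cantor set is a nonempty totally disconnected, perfect, compact metric space. *)

theory Defs
  imports "HOL-Analysis.Analysis"
begin

definition cantor_set :: "'a::metric_space set \<Rightarrow> bool" where
  "cantor_set K \<longleftrightarrow> K \<noteq> {} \<and> compact K \<and> (\<forall>x\<in>K. x islimpt K) \<and>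
     (\<forall>C. C \<subseteq> K \<and> connected C \<longrightarrow> (\<exists>x. C \<subseteq> {x}))"

end

theory Submission
  imports Defs
begin
lemma cantor_clopen_nbhd:
  fixes X :: "'a::metric_space set"
  assumes "cantor_set X" "x \<in> X" "e > 0"
  obtains U where "x \<in> U" "U \<subseteq> X \<inter> ball x e" "closed U" "closed (X - U)"
proof -
  let ?X = "top_of_set X"
  have cX: "compact X" using assms(1) by (simp add: cantor_set_def)
  then have clX: "closed X" by (simp add: compact_imp_closed)
  have lc: "locally_compact_space ?X"
    by (simp add: cX compact_imp_locally_compact_space compact_space_subtopology)
  have hs: "Hausdorff_space ?X"
    by (simp add: Hausdorff_space_subtopology)
  have cc: "connected_component_of_set ?X x = {x}"
  proof -
    have "y = x" if yy: "connected_component_of ?X x y" for y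
    proof -
      obtain T where T: "connectedin ?X T" "x \<in> T" "y \<in> T"
        using yy by (auto simp: connected_component_of_def)
      then have "T \<subseteq> X" "connected T" by (auto simp: connectedin_subtopology)
      then have "\<exists>z. T \<subseteq> {z}" using assms(1) unfolding cantor_set_def by blast
      then obtain z where "T \<subseteq> {z}" by blast
      then show ?thesis using T by auto
    qed
    moreover have "connected_component_of ?X x x" using assms(2)
      by (simp add: connected_component_of_refl)
    ultimately show ?thesis by auto
  qed
  have C: "{x} \<in> connected_components_of ?X"
    using cc assms(2) unfolding connected_components_of_def by (metis image_eqI topspace_euclidean_subtopology)
  have W: "openin ?X (X \<inter> ball x e)" by (simp add: openin_open_Int)
  obtain U V where UV: "openin ?X U" "openin ?X V" "disjnt U V" "U \<union> V = topspace ?X" "{x} \<subseteq> U" "U \<subseteq> X \<inter> ball x e"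
    using wilder_locally_compact_component_thm[OF lc hs C _ W] assms by auto
  have "U = X - V" using UV by (auto simp: disjnt_def)
  then have "closedin ?X U" using UV by auto
  then have "closed U" using clX closedin_closed_trans by blast
  have "X - U = V" using UV by (auto simp: disjnt_def)
  then have "closedin ?X (X - U)" using UV by auto
  then have "closed (X - U)" using clX closedin_closed_trans by blast
  show ?thesis
    using that UV \<open>closed U\<close> \<open>closed (X - U)\<close> by auto
qed

definition clop :: "'a::metric_space set \<Rightarrow> 'a set \<Rightarrow> bool" where
  "clop X V \<longleftrightarrow> V \<subseteq> X \<and> closed V \<and> closed (X - V)"

lemma clop_Int: "clop X A \<Longrightarrow> clop X B \<Longrightarrow> clop X (A \<inter> B)"
  unfolding clop_def by (auto simp: Diff_Int closed_Un)

lemma clop_Diff: "clop X A \<Longrightarrow> clop X B \<Longrightarrow> clop X (A - B)"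
proof -
  assume a: "clop X A" "clop X B"
  have "A - B = A \<inter> (X - B)" using a by (auto simp: clop_def)
  moreover have "X - (A - B) = (X - A) \<union> B" using a by (auto simp: clop_def)
  ultimately show ?thesis using a unfolding clop_def
    by (metis closed_Int closed_Un Diff_subset inf.coboundedI1)
qed

lemma clop_Un: "clop X A \<Longrightarrow> clop X B \<Longrightarrow> clop X (A \<union> B)"
  unfolding clop_def by (auto simp: Diff_Un closed_Int)

lemma clop_open: assumes "clop X V" shows "V = X \<inter> (- (X - V)) \<and> open (- (X - V))"
proof -
  have "closed (X - V)" using assms by (simp add: clop_def)
  then have "open (- (X - V))" by (rule open_Compl)
  then show ?thesis using assms by (auto simp: clop_def)
qed

lemma cantor_clop:
  assumes "cantor_set X" "clop X V" "V \<noteq> {}"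
  shows "cantor_set V"
proof -
  have cX: "compact X" using assms(1) by (simp add: cantor_set_def)
  have VX: "V \<subseteq> X" "closed V" using assms(2) by (auto simp: clop_def)
  have "compact V" using compact_Int_closed[OF cX VX(2)] VX(1) by (simp add: Int_absorb1)
  moreover have "x islimpt V" if "x \<in> V" for x
  proof -
    have xl: "x islimpt X" using assms(1) that VX by (auto simp: cantor_set_def)
    obtain Op where Op: "V = X \<inter> Op" "open Op" using clop_open[OF assms(2)] by blast
    show ?thesis unfolding islimpt_def
    proof (intro allI impI)
      fix T assume T: "x \<in> T" "open T"
      then have "x \<in> T \<inter> Op" "open (T \<inter> Op)" using Op that by auto
      then obtain y where "y \<in> X" "y \<in> T \<inter> Op" "y \<noteq> x" using xl unfolding islimpt_def by blast
      then show "\<exists>y\<in>V. y \<in> T \<and> y \<noteq> x" using Op by auto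
    qed
  qed
  moreover have "\<forall>C. C \<subseteq> V \<and> connected C \<longrightarrow> (\<exists>x. C \<subseteq> {x})"
    using assms(1) VX(1) unfolding cantor_set_def by blast
  ultimately show ?thesis using assms(3) by (simp add: cantor_set_def)
qed

lemma cantor_split:
  assumes "cantor_set X" "clop X c" "c \<noteq> {}"
  shows "\<exists>V. clop X V \<and> V \<subseteq> c \<and> V \<noteq> {} \<and> c - V \<noteq> {}"
proof -
  obtain x where x: "x \<in> c" using assms(3) by blast
  have cX: "c \<subseteq> X" using assms(2) by (auto simp: clop_def)
  have xl: "x islimpt X" using assms(1) x cX by (auto simp: cantor_set_def)
  obtain Op where Op: "c = X \<inter> Op" "open Op" using clop_open[OF assms(2)] by blast
  obtain y where y: "y \<in> X" "y \<in> Op" "y \<noteq> x" using xl Op x unfolding islimpt_def by blast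
  have yc: "y \<in> c" using Op y by auto
  obtain U where U: "x \<in> U" "U \<subseteq> X \<inter> ball x (dist x y)" "closed U" "closed (X - U)"
    using cantor_clopen_nbhd[OF assms(1), of x "dist x y"] x cX y by auto
  have cU: "clop X U" using U by (auto simp: clop_def)
  have "y \<notin> U" using U(2) by auto
  then show ?thesis using clop_Int[OF cU assms(2)] x yc U(1)
    by (intro exI[of _ "U \<inter> c"]) auto
qed

lemma cantor_separating:
  fixes X :: "'a::metric_space set"
  assumes "cantor_set X"
  shows "\<exists>Q::nat \<Rightarrow> 'a set. (\<forall>k. clop X (Q k)) \<and>
           (\<forall>x\<in>X. \<forall>y\<in>X. x \<noteq> y \<longrightarrow> (\<exists>k. x \<in> Q k \<and> y \<notin> Q k))"
proof -
  have cX: "compact X" and ne: "X \<noteq> {}" using assms by (auto simp: cantor_set_def)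
  have "\<forall>k. \<forall>z\<in>X. \<exists>U. z \<in> U \<and> U \<subseteq> X \<inter> ball z (1 / Suc k) \<and> clop X U"
  proof (intro allI ballI)
    fix k z assume "z \<in> X"
    then obtain U where "z \<in> U" "U \<subseteq> X \<inter> ball z (1 / Suc k)" "closed U" "closed (X - U)"
      using cantor_clopen_nbhd[OF assms, of z "1 / Suc k"] by auto
    then show "\<exists>U. z \<in> U \<and> U \<subseteq> X \<inter> ball z (1 / Suc k) \<and> clop X U"
      by (auto simp: clop_def)
  qed
  then obtain U where U: "\<And>k z. z \<in> X \<Longrightarrow> z \<in> U k z \<and> U k z \<subseteq> X \<inter> ball z (1 / Suc k) \<and> clop X (U k z)"
    by metis
  define Op where "Op k z = - (X - U k z)" for k z
  have Oo: "z \<in> X \<Longrightarrow> open (Op k z)" for k z unfolding Op_def by (rule open_Compl) (use U[of z k] in \<open>auto simp: clop_def\<close>)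
  have OU: "z \<in> X \<Longrightarrow> X \<inter> Op k z = U k z" for k z using U[of z k] by (auto simp: Op_def clop_def)
  have "\<exists>T. T \<subseteq> X \<and> finite T \<and> X \<subseteq> \<Union> (Op k ` T)" for k
  proof -
    have "X \<subseteq> \<Union> (Op k ` X)" using U by (auto simp: Op_def)
    then show ?thesis using compactE_image[OF cX, of X "Op k"] Oo by metis
  qed
  then obtain T where T: "\<And>k. T k \<subseteq> X \<and> finite (T k) \<and> X \<subseteq> \<Union> (Op k ` T k)" by metis
  define S where "S = (\<Union>k. U k ` T k)"
  have cS: "countable S" unfolding S_def using T by (intro countable_UN) (auto intro: countable_finite)
  have "T 0 \<noteq> {}" using T[of 0] ne by auto
  then have Sne: "S \<noteq> {}" by (auto simp: S_def)
  define Q where "Q = from_nat_into S"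
  have rQ: "range Q = S" using range_from_nat_into[OF Sne cS] by (simp add: Q_def)
  have "clop X (Q k)" for k
  proof -
    have "Q k \<in> S" using rQ by auto
    then obtain j z where "z \<in> T j" "Q k = U j z" by (auto simp: S_def)
    then show ?thesis using T[of j] U[of z j] by auto
  qed
  moreover have "\<exists>k. x \<in> Q k \<and> y \<notin> Q k" if xy: "x \<in> X" "y \<in> X" "x \<noteq> y" for x y
  proof -
    have "dist x y / 2 > 0" using xy by simp
    then obtain k where k: "inverse (real (Suc k)) < dist x y / 2" using reals_Archimedean by blast
    obtain z where z: "z \<in> T k" "x \<in> Op k z" using T[of k] xy by auto
    have zX: "z \<in> X" using z T by auto
    have xU: "x \<in> U k z" using OU[OF zX] xy z by auto
    have "y \<notin> U k z"
    proof
      assume "y \<in> U k z"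
      then have "dist z y < 1 / Suc k" "dist z x < 1 / Suc k" using U[OF zX, of k] xU by auto
      then have "dist x y < 2 / Suc k" using dist_triangle[of x y z] by (simp add: dist_commute)
      then show False using k by (simp add: field_simps)
    qed
    moreover have "U k z \<in> S" using z by (auto simp: S_def)
    ultimately show ?thesis using xU rQ by (metis imageE)
  qed
  ultimately show ?thesis by blast
qed

primrec cellf :: "(nat \<Rightarrow> 'a set \<Rightarrow> 'a set) \<Rightarrow> 'a set \<Rightarrow> bool list \<Rightarrow> 'a set" where
  "cellf sp X [] = X"
| "cellf sp X (b # s) = (if b then sp (length s) (cellf sp X s) else cellf sp X s - sp (length s) (cellf sp X s))"

definition enc :: "(nat \<Rightarrow> bool) \<Rightarrow> nat \<Rightarrow> bool list" where
  "enc a n = rev (map a [0..<n])"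

lemma enc_0 [simp]: "enc a 0 = []" and enc_Suc [simp]: "enc a (Suc n) = a n # enc a n"
  and length_enc [simp]: "length (enc a n) = n"
  by (auto simp: enc_def)

lemma enc_eq_Suc: "enc a (Suc n) = enc b (Suc n) \<Longrightarrow> a n = b n"
  by simp

definition M :: "(nat \<Rightarrow> real) set" where
  "M = {a. \<forall>n. a n \<in> {0,1}}"

locale coding =
  fixes X :: "'a::metric_space set" and sp :: "nat \<Rightarrow> 'a set \<Rightarrow> 'a set"
  assumes cX: "cantor_set X"
    and spP: "\<And>n c. clop X c \<Longrightarrow> c \<noteq> {} \<Longrightarrow> clop X (sp n c) \<and> sp n c \<subseteq> c \<and> sp n c \<noteq> {} \<and> c - sp n c \<noteq> {}"
begin

abbreviation "cell \<equiv> cellf sp X"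

lemma cell_ok: "clop X (cell s) \<and> cell s \<noteq> {}"
proof (induction s)
  case Nil
  have "compact X" "X \<noteq> {}" using cX by (auto simp: cantor_set_def)
  then show ?case by (simp add: clop_def compact_imp_closed)
next
  case (Cons b s)
  then show ?case using spP[of "cell s" "length s"] clop_Diff by auto
qed

lemma cell_sub: "cell (b # s) \<subseteq> cell s"
  using spP[of "cell s" "length s"] cell_ok[of s] by auto

lemma cell_X: "cell s \<subseteq> X"
  using cell_ok[of s] by (auto simp: clop_def)

lemma cell_split: "cell s = cell (True # s) \<union> cell (False # s)" "cell (True # s) \<inter> cell (False # s) = {}"
  using spP[of "cell s" "length s"] cell_ok[of s] by auto

lemma cell_uniq: "x \<in> cell s \<Longrightarrow> x \<in> cell t \<Longrightarrow> length s = length t \<Longrightarrow> s = t"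
proof (induction s arbitrary: t)
  case Nil
  then show ?case by simp
next
  case (Cons b s)
  then obtain c t' where t: "t = c # t'" by (cases t) auto
  have "x \<in> cell s" using Cons.prems(1) cell_sub[of b s] by blast
  moreover have "x \<in> cell t'" using Cons.prems(2) t cell_sub[of c t'] by blast
  moreover have "length s = length t'" using Cons.prems(3) t by simp
  ultimately have "s = t'" using Cons.IH by blast
  moreover have "b = c"
    using Cons(2,3) t \<open>s = t'\<close> cell_split(2)[of s] by (cases b; cases c) auto
  ultimately show ?case using t by simp
qed

definition bphi :: "'a \<Rightarrow> nat \<Rightarrow> bool" where
  "bphi x i \<longleftrightarrow> (\<exists>s. length s = i \<and> x \<in> cell (True # s))"

lemma bphiI: "length s = i \<Longrightarrow> x \<in> cell (True # s) \<Longrightarrow> bphi x i"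
  unfolding bphi_def by blast

lemma cell_enc: "x \<in> X \<Longrightarrow> x \<in> cell (enc (bphi x) n)"
proof (induction n)
  case 0
  then show ?case by simp
next
  case (Suc n)
  let ?s = "enc (bphi x) n"
  have xs: "x \<in> cell ?s" using Suc.IH Suc.prems .
  have "x \<in> cell (True # ?s) \<or> x \<in> cell (False # ?s)" using xs cell_split(1)[of ?s] by blast
  then show ?case
  proof
    assume T: "x \<in> cell (True # ?s)"
    then have "bphi x n" using bphiI[of ?s n x] by simp
    then have "enc (bphi x) (Suc n) = True # ?s" by simp
    then show ?thesis using T by (simp only:)
  next
    assume F: "x \<in> cell (False # ?s)"
    have "\<not> bphi x n"
    proof
      assume "bphi x n"
      then obtain s' where s': "length s' = n" "x \<in> cell (True # s')" unfolding bphi_def by blast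
      have "x \<in> cell s'" using s'(2) cell_sub[of True s'] by blast
      then have "s' = ?s" using cell_uniq[of x s' ?s] xs s'(1) by simp
      then show False using s'(2) F cell_split(2)[of ?s] by blast
    qed
    then have "enc (bphi x) (Suc n) = False # ?s" by simp
    then show ?thesis using F by (simp only:)
  qed
qed

lemma cell_iff: assumes "x \<in> X" "length s = n" shows "x \<in> cell s \<longleftrightarrow> s = enc (bphi x) n"
proof
  assume "x \<in> cell s"
  then show "s = enc (bphi x) n" using cell_uniq[OF _ cell_enc[OF assms(1)]] assms(2) by simp
next
  assume "s = enc (bphi x) n"
  then show "x \<in> cell s" using cell_enc[OF assms(1)] by simp
qed

definition phi :: "'a \<Rightarrow> nat \<Rightarrow> real" where
  "phi x i = (if bphi x i then 1 else 0)"


lemma bphi_set: "{x \<in> X. bphi x i} = (\<Union>s\<in>{s. set s \<subseteq> UNIV \<and> length s = i}. cell (True # s))"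
proof
  show "{x \<in> X. bphi x i} \<subseteq> (\<Union>s\<in>{s. set s \<subseteq> UNIV \<and> length s = i}. cell (True # s))"
    unfolding bphi_def by blast
  show "(\<Union>s\<in>{s. set s \<subseteq> UNIV \<and> length s = i}. cell (True # s)) \<subseteq> {x \<in> X. bphi x i}"
  proof
    fix x assume "x \<in> (\<Union>s\<in>{s. set s \<subseteq> UNIV \<and> length s = i}. cell (True # s))"
    then obtain s where "length s = i" "x \<in> cell (True # s)" by blast
    then show "x \<in> {x \<in> X. bphi x i}" using cell_X[of "True # s"] unfolding bphi_def by blast
  qed
qed

lemma clop_Union: "finite F \<Longrightarrow> (\<And>A. A \<in> F \<Longrightarrow> clop X A) \<Longrightarrow> clop X (\<Union>F)"
proof (induction F rule: finite_induct)
  case empty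
  have "compact X" using cX by (simp add: cantor_set_def)
  then show ?case by (simp add: clop_def compact_imp_closed)
next
  case (insert x F)
  then show ?case using clop_Un by auto
qed

lemma bphi_clop: "clop X {x \<in> X. bphi x i}"
proof -
  have f: "finite {s::bool list. set s \<subseteq> UNIV \<and> length s = i}"
    by (rule finite_lists_length_eq) simp
  show ?thesis unfolding bphi_set
    by (rule clop_Union) (use f cell_ok in \<open>blast+\<close>)
qed

lemma phi_cont: "continuous_on X phi"
proof (rule continuous_on_coordinatewise_then_product)
  fix i
  let ?A = "{x \<in> X. bphi x i}"
  have c: "clop X ?A" by (rule bphi_clop)
  have "continuous_on (?A \<union> (X - ?A)) (\<lambda>x. if x \<in> ?A then 1 else (0::real))"
    by (rule continuous_on_If) (use c in \<open>auto simp: clop_def\<close>)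
  moreover have "?A \<union> (X - ?A) = X" by auto
  ultimately have "continuous_on X (\<lambda>x. if x \<in> ?A then 1 else (0::real))" by simp
  then show "continuous_on X (\<lambda>x. phi x i)"
    by (rule continuous_on_eq) (auto simp: phi_def)
qed

lemma bphi_phi: "phi x = phi y \<Longrightarrow> bphi x = bphi y"
  unfolding phi_def by (rule ext) (metis zero_neq_one)

lemma phi_M: "phi x \<in> M"
  unfolding M_def phi_def by auto

lemma phi_onto: "M \<subseteq> phi ` X"
proof
  fix a assume aM: "a \<in> M"
  define a' where "a' n = (a n = 1)" for n
  define F where "F n = cell (enc a' n)" for n
  have Fdec: "F (Suc n) \<subseteq> F n" for n unfolding F_def using cell_sub by simp
  have Fmono: "i \<le> m \<Longrightarrow> F m \<subseteq> F i" for i m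
    using lift_Suc_antimono_le[of F, OF Fdec] by blast
  have cXc: "compact X" using cX by (simp add: cantor_set_def)
  have "X \<inter> (\<Inter>i\<in>UNIV. F i) \<noteq> {}"
  proof (rule compact_imp_fip_image[OF cXc])
    show "closed (F i)" for i unfolding F_def using cell_ok by (simp add: clop_def)
    fix I' :: "nat set" assume "finite I'"
    then obtain m where m: "I' \<subseteq> {..<m}" using finite_nat_bounded by blast
    have "F m \<subseteq> X" unfolding F_def by (rule cell_X)
    moreover have "F m \<subseteq> F i" if "i \<in> I'" for i
    proof -
      have "i \<le> m" using m that by auto
      then show ?thesis by (rule Fmono)
    qed
    ultimately have "F m \<subseteq> X \<inter> (\<Inter>i\<in>I'. F i)" by blast
    moreover have "F m \<noteq> {}" unfolding F_def using cell_ok by simp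
    ultimately show "X \<inter> (\<Inter>i\<in>I'. F i) \<noteq> {}" by blast
  qed
  then obtain x where x: "x \<in> X" "\<And>i. x \<in> F i" by blast
  have "a' n = bphi x n" for n
  proof -
    have "x \<in> cell (enc a' (Suc n))" using x(2)[of "Suc n"] unfolding F_def .
    then have "enc a' (Suc n) = enc (bphi x) (Suc n)"
      using cell_iff[OF x(1), of "enc a' (Suc n)" "Suc n"] length_enc by blast
    then show ?thesis by simp
  qed
  then have "phi x = a"
  proof -
    assume h: "\<And>n. a' n = bphi x n"
    show "phi x = a"
    proof
      fix n
      have "a n = 0 \<or> a n = 1" using aM by (auto simp: M_def)
      then show "phi x n = a n" using h[of n] unfolding phi_def a'_def by auto
    qed
  qed
  then show "a \<in> phi ` X" using x(1) by blast
qed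

end

locale coding2 = coding +
  fixes Q :: "nat \<Rightarrow> 'a set"
  assumes spQ: "\<And>n c. clop X c \<Longrightarrow> c \<inter> Q n \<noteq> {} \<Longrightarrow> c - Q n \<noteq> {} \<Longrightarrow> sp n c = c \<inter> Q n"
    and Qsep: "\<And>x y. x \<in> X \<Longrightarrow> y \<in> X \<Longrightarrow> x \<noteq> y \<Longrightarrow> \<exists>k. x \<in> Q k \<and> y \<notin> Q k"
begin

lemma phi_inj: "inj_on phi X"
proof (rule inj_onI, rule ccontr)
  fix x y assume xy: "x \<in> X" "y \<in> X" "phi x = phi y" "x \<noteq> y"
  obtain k where k: "x \<in> Q k" "y \<notin> Q k" using Qsep xy by blast
  have b: "bphi x = bphi y" using bphi_phi xy(3) .
  let ?s = "enc (bphi x) k"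
  have xs: "x \<in> cell ?s" and ys: "y \<in> cell ?s" using cell_enc xy(1,2) b by metis+
  have spe: "sp k (cell ?s) = cell ?s \<inter> Q k"
    using spQ[of "cell ?s" k] cell_ok xs ys k by blast
  have xs2: "x \<in> cell (bphi x k # ?s)" using cell_enc[OF xy(1), of "Suc k"] by simp
  have ys2: "y \<in> cell (bphi x k # ?s)" using cell_enc[OF xy(2), of "Suc k"] b by simp
  show False
  proof (cases "bphi x k")
    case True
    then show False using ys2 spe k by simp
  next
    case False
    then show False using xs2 spe k by simp
  qed
qed

lemma phi_homeo: "\<exists>psi. homeomorphism X M phi psi"
proof (rule homeomorphism_compact)
  show "compact X" using cX by (simp add: cantor_set_def)
  show "continuous_on X phi" by (rule phi_cont)
  show "phi ` X = M" using phi_onto phi_M by blast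
  show "inj_on phi X" by (rule phi_inj)
qed

end

lemma cantor_homeo_M:
  fixes X :: "'a::metric_space set"
  assumes "cantor_set X"
  shows "\<exists>phi psi. homeomorphism X M phi psi"
proof -
  obtain Q :: "nat \<Rightarrow> 'a set" where Q: "\<And>k. clop X (Q k)"
    "\<And>x y. x \<in> X \<Longrightarrow> y \<in> X \<Longrightarrow> x \<noteq> y \<Longrightarrow> \<exists>k. x \<in> Q k \<and> y \<notin> Q k"
    using cantor_separating[OF assms] by blast
  define sp where "sp n c = (if c \<inter> Q n \<noteq> {} \<and> c - Q n \<noteq> {} then c \<inter> Q n
     else SOME V. clop X V \<and> V \<subseteq> c \<and> V \<noteq> {} \<and> c - V \<noteq> {})" for n c
  have spP: "clop X (sp n c) \<and> sp n c \<subseteq> c \<and> sp n c \<noteq> {} \<and> c - sp n c \<noteq> {}"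
    if "clop X c" "c \<noteq> {}" for n c
  proof (cases "c \<inter> Q n \<noteq> {} \<and> c - Q n \<noteq> {}")
    case True
    then show ?thesis using clop_Int[OF that(1) Q(1)] unfolding sp_def by auto
  next
    case False
    have "\<exists>V. clop X V \<and> V \<subseteq> c \<and> V \<noteq> {} \<and> c - V \<noteq> {}"
      by (rule cantor_split[OF assms that])
    then have sv: "clop X (SOME V. clop X V \<and> V \<subseteq> c \<and> V \<noteq> {} \<and> c - V \<noteq> {}) \<and>
      (SOME V. clop X V \<and> V \<subseteq> c \<and> V \<noteq> {} \<and> c - V \<noteq> {}) \<subseteq> c \<and>
      (SOME V. clop X V \<and> V \<subseteq> c \<and> V \<noteq> {} \<and> c - V \<noteq> {}) \<noteq> {} \<and>
      c - (SOME V. clop X V \<and> V \<subseteq> c \<and> V \<noteq> {} \<and> c - V \<noteq> {}) \<noteq> {}"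
      by (rule someI_ex)
    have e: "sp n c = (SOME V. clop X V \<and> V \<subseteq> c \<and> V \<noteq> {} \<and> c - V \<noteq> {})"
      unfolding sp_def using False by (rule if_not_P)
    show ?thesis unfolding e by (rule sv)
  qed
  interpret coding2 X sp Q
  proof
    show "cantor_set X" by (rule assms)
    show "\<And>n c. clop X c \<Longrightarrow> c \<noteq> {} \<Longrightarrow> clop X (sp n c) \<and> sp n c \<subseteq> c \<and> sp n c \<noteq> {} \<and> c - sp n c \<noteq> {}"
      by (rule spP)
    show "\<And>n c. clop X c \<Longrightarrow> c \<inter> Q n \<noteq> {} \<Longrightarrow> c - Q n \<noteq> {} \<Longrightarrow> sp n c = c \<inter> Q n"
      unfolding sp_def by simp
    show "\<And>x y. x \<in> X \<Longrightarrow> y \<in> X \<Longrightarrow> x \<noteq> y \<Longrightarrow> \<exists>k. x \<in> Q k \<and> y \<notin> Q k"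
      by (rule Q(2))
  qed
  show ?thesis using phi_homeo by blast
qed

definition consr :: "real \<Rightarrow> (nat \<Rightarrow> real) \<Rightarrow> nat \<Rightarrow> real" where
  "consr b a = (\<lambda>n. case n of 0 \<Rightarrow> b | Suc m \<Rightarrow> a m)"

lemma consr_0 [simp]: "consr b a 0 = b" and consr_Suc [simp]: "consr b a (Suc m) = a m"
  by (auto simp: consr_def)

lemma consr_inj: "consr b a = consr c d \<Longrightarrow> b = c \<and> a = d"
  by (metis consr_0 consr_Suc ext)

lemma consr_M: "a \<in> M \<Longrightarrow> b \<in> {0,1} \<Longrightarrow> consr b a \<in> M"
  unfolding M_def by (auto simp: consr_def split: nat.split)

lemma consr_cont: "continuous_on S (consr b)"
proof (rule continuous_on_coordinatewise_then_product)
  fix i show "continuous_on S (\<lambda>a. consr b a i)"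
  proof (cases i)
    case 0 then show ?thesis by simp
  next
    case (Suc m)
    then show ?thesis using continuous_on_subset[OF continuous_on_product_coordinates[of m]] by simp
  qed
qed

lemma consr_pow: "((consr b ^^ n) a) i = (if i < n then b else a (i - n))"
proof (induction n arbitrary: i)
  case 0 then show ?case by simp
next
  case (Suc n)
  then show ?case by (cases i) auto
qed

lemma consr_lim: "(\<lambda>n. (consr b ^^ n) a) \<longlonglongrightarrow> (\<lambda>_. b)"
proof -
  have "limitin (product_topology (\<lambda>i. euclidean) UNIV) (\<lambda>n. (consr b ^^ n) a) (\<lambda>_. b) sequentially"
    unfolding limitin_componentwise
  proof (intro conjI ballI)
    show "(\<lambda>_. b) \<in> extensional UNIV" by simp
    show "\<forall>\<^sub>F n in sequentially. (consr b ^^ n) a \<in> topspace (product_topology (\<lambda>i. euclidean) UNIV)" by simp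
    fix i :: nat
    have "\<forall>\<^sub>F n in sequentially. (\<lambda>n. (consr b ^^ n) a i) n = b"
      unfolding eventually_sequentially by (intro exI[of _ "Suc i"]) (auto simp: consr_pow)
    then have "(\<lambda>n. (consr b ^^ n) a i) \<longlonglongrightarrow> b" by (rule tendsto_eventually)
    then show "limitin euclidean (\<lambda>n. (consr b ^^ n) a i) b sequentially" by simp
  qed
  then show ?thesis by (simp add: euclidean_product_topology)
qed

lemma contract_homeo:
  fixes X E :: "'a::metric_space set"
  assumes cX: "cantor_set X" and cE: "cantor_set E" and dj: "X \<inter> E = {}"
  shows "\<exists>f g p. homeomorphism (X \<union> E) X f g \<and> p \<in> X \<and> f p = p \<and>
           (\<forall>x\<in>X \<union> E. (\<lambda>n. (f ^^ n) x) \<longlonglongrightarrow> p) \<and>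
           (\<forall>x. (\<forall>n. x \<in> (f ^^ n) ` (X \<union> E)) \<longrightarrow> x = p)"
proof -
  obtain pX qX where hX: "homeomorphism X M pX qX" using cantor_homeo_M[OF cX] by blast
  obtain pE qE where hE: "homeomorphism E M pE qE" using cantor_homeo_M[OF cE] by blast
  have clX: "closed X" and clE: "closed E" and coX: "compact X" and coE: "compact E"
    using cX cE by (auto simp: cantor_set_def compact_imp_closed)
  define g where "g x = (if x \<in> X then consr 1 (pX x) else consr 0 (pE x))" for x
  have gX: "x \<in> X \<Longrightarrow> g x = consr 1 (pX x)" for x by (simp add: g_def)
  have gE: "x \<in> E \<Longrightarrow> g x = consr 0 (pE x)" for x using dj by (auto simp: g_def)
  have pXM: "x \<in> X \<Longrightarrow> pX x \<in> M" for x using hX by (auto simp: homeomorphism_def)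
  have pEM: "x \<in> E \<Longrightarrow> pE x \<in> M" for x using hE by (auto simp: homeomorphism_def)
  have gM: "x \<in> X \<union> E \<Longrightarrow> g x \<in> M" for x using gX gE pXM pEM consr_M by auto
  have "\<exists>g'. homeomorphism (X \<union> E) M g g'"
  proof (rule homeomorphism_compact)
    show "compact (X \<union> E)" using coX coE by (rule compact_Un)
    have cpX: "continuous_on X pX" and cpE: "continuous_on E pE"
      using hX hE by (auto simp: homeomorphism_def)
    have "continuous_on (X \<union> E) (\<lambda>x. if x \<in> X then consr 1 (pX x) else consr 0 (pE x))"
    proof (rule continuous_on_If[OF clX clE])
      show "continuous_on X (\<lambda>x. consr 1 (pX x))"
        using continuous_on_compose[OF cpX consr_cont] by (simp add: o_def)
      show "continuous_on E (\<lambda>x. consr 0 (pE x))"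
        using continuous_on_compose[OF cpE consr_cont] by (simp add: o_def)
    qed (use dj in auto)
    then show "continuous_on (X \<union> E) g" by (simp add: g_def[abs_def])
    show "g ` (X \<union> E) = M"
    proof
      show "g ` (X \<union> E) \<subseteq> M" using gM by blast
      show "M \<subseteq> g ` (X \<union> E)"
      proof
        fix a assume aM: "a \<in> M"
        define t where "t n = a (Suc n)" for n
        have tM: "t \<in> M" using aM by (auto simp: M_def t_def)
        have at: "a = consr (a 0) t" by (rule ext) (auto simp: t_def consr_def split: nat.split)
        have "a 0 = 0 \<or> a 0 = 1" using aM by (auto simp: M_def)
        then show "a \<in> g ` (X \<union> E)"
        proof
          assume "a 0 = 1"
          moreover have "qX t \<in> X" "pX (qX t) = t" using hX tM by (auto simp: homeomorphism_def)
          ultimately show ?thesis using at gX by (metis UnI1 image_eqI)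
        next
          assume "a 0 = 0"
          moreover have "qE t \<in> E" "pE (qE t) = t" using hE tM by (auto simp: homeomorphism_def)
          ultimately show ?thesis using at gE by (metis UnI2 image_eqI)
        qed
      qed
    qed
    show "inj_on g (X \<union> E)"
    proof (rule inj_onI)
      fix x y assume xy: "x \<in> X \<union> E" "y \<in> X \<union> E" "g x = g y"
      have iX: "inj_on pX X" using hX by (metis homeomorphism_def inj_on_inverseI)
      have iE: "inj_on pE E" using hE by (metis homeomorphism_def inj_on_inverseI)
      show "x = y"
      proof (cases "x \<in> X")
        case True
        show ?thesis
        proof (cases "y \<in> X")
          case True
          then show ?thesis using \<open>x \<in> X\<close> xy gX consr_inj iX by (metis inj_onD)
        next
          case False
          then have "y \<in> E" using xy by auto
          then show ?thesis using \<open>x \<in> X\<close> xy gX gE consr_inj by (metis zero_neq_one)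
        qed
      next
        case False
        then have xE: "x \<in> E" using xy by auto
        show ?thesis
        proof (cases "y \<in> X")
          case True
          then show ?thesis using xE xy gX gE consr_inj by (metis zero_neq_one)
        next
          case False
          then have "y \<in> E" using xy by auto
          then show ?thesis using xE xy gE consr_inj iE by (metis inj_onD)
        qed
      qed
    qed
  qed
  then obtain g' where hg: "homeomorphism (X \<union> E) M g g'" by blast
  define f where "f = qX \<circ> g"
  have hf: "homeomorphism (X \<union> E) X f (g' \<circ> pX)"
    unfolding f_def by (rule homeomorphism_compose[OF hg homeomorphism_symD[OF hX]])
  have qXM: "a \<in> M \<Longrightarrow> qX a \<in> X \<and> pX (qX a) = a" for a using hX by (auto simp: homeomorphism_def)
  have gf: "x \<in> X \<union> E \<Longrightarrow> f x \<in> X \<and> g (f x) = consr 1 (g x)" for x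
    using qXM[OF gM[of x]] gX[of "f x"] by (simp add: f_def)
  have gfn: "x \<in> X \<union> E \<Longrightarrow> (f ^^ n) x \<in> X \<union> E \<and> g ((f ^^ n) x) = (consr 1 ^^ n) (g x)" for x n
  proof (induction n)
    case 0 then show ?case by simp
  next
    case (Suc n)
    then show ?case using gf[of "(f ^^ n) x"] by auto
  qed
  define one where "one = (\<lambda>_::nat. 1::real)"
  have oneM: "one \<in> M" by (simp add: M_def one_def)
  define p where "p = qX one"
  have pX: "p \<in> X" using qXM[OF oneM] by (simp add: p_def)
  have gp: "g p = one"
    using qXM[OF oneM] gX[OF pX] by (simp add: p_def one_def consr_def fun_eq_iff split: nat.split)
  have "f p = qX (g p)" by (simp add: f_def)
  then have fp: "f p = p" using gp by (simp only: p_def[symmetric])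
  have g'g: "x \<in> X \<union> E \<Longrightarrow> g' (g x) = x" for x using hg by (simp add: homeomorphism_def)
  have g'p: "g' one = p" using g'g[of p] gp pX by simp
  have cg': "continuous_on M g'" using hg by (simp add: homeomorphism_def)
  have conv: "(\<lambda>n. (f ^^ n) x) \<longlonglongrightarrow> p" if x: "x \<in> X \<union> E" for x
  proof -
    have e: "(f ^^ n) x = g' ((consr 1 ^^ n) (g x))" for n
      using gfn[OF x, of n] g'g by metis
    have "(\<lambda>n. g' ((consr 1 ^^ n) (g x))) \<longlonglongrightarrow> g' one"
    proof (rule continuous_on_tendsto_compose[OF cg' _ oneM])
      show "(\<lambda>n. (consr 1 ^^ n) (g x)) \<longlonglongrightarrow> one" unfolding one_def by (rule consr_lim)
      have "(consr 1 ^^ n) (g x) \<in> M" for n using gfn[OF x, of n] gM by metis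
      then show "\<forall>\<^sub>F n in sequentially. (consr 1 ^^ n) (g x) \<in> M" by simp
    qed
    then show ?thesis using e g'p by simp
  qed
  have trap: "x = p" if tr: "\<forall>n. x \<in> (f ^^ n) ` (X \<union> E)" for x
  proof -
    have x0: "x \<in> X \<union> E" using tr[rule_format, of 0] by simp
    have "g x i = 1" for i
    proof -
      obtain y where y: "y \<in> X \<union> E" "x = (f ^^ Suc i) y" using tr by blast
      then have "g x = (consr 1 ^^ Suc i) (g y)" using gfn[OF y(1), of "Suc i"] by metis
      then show ?thesis using consr_pow[of "Suc i" 1 "g y" i] by (simp del: funpow.simps)
    qed
    then have "g x = g p" using gp by (auto simp: one_def)
    then show ?thesis using g'g[OF x0] g'g[of p] pX by (metis UnI1)
  qed
  show ?thesis using hf pX fp conv trap by blast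
qed

lemma piece_spec:
  fixes B Kj :: "'a::metric_space set"
  assumes cB: "cantor_set B" and cKj: "cantor_set Kj"
    and cBmK: "B - Kj \<noteq> {} \<Longrightarrow> cantor_set (B - Kj)"
    and cKmB: "Kj - B \<noteq> {} \<Longrightarrow> cantor_set (Kj - B)"
    and cases: "B \<subseteq> Kj \<or> Kj \<subseteq> B"
  shows "\<exists>h hi p. homeomorphism B Kj h hi \<and> p \<in> Kj \<and>
     ((B = Kj \<and> (\<forall>x\<in>B. h x = x)) \<or>
      (Kj \<subset> B \<and> h p = p \<and> (\<forall>x\<in>Kj. (\<lambda>n. (h ^^ n) x) \<longlonglongrightarrow> p)) \<or>
      (B \<subset> Kj \<and> p \<in> B \<and> h p = p \<and> (\<forall>x. (\<forall>n. x \<in> (hi ^^ n) ` Kj) \<longrightarrow> x = p)))"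
proof -
  consider "B = Kj" | "Kj \<subset> B" | "B \<subset> Kj" using cases by blast
  then show ?thesis
  proof cases
    case 1
    have "Kj \<noteq> {}" using cKj by (simp add: cantor_set_def)
    then obtain p where "p \<in> Kj" by blast
    then show ?thesis using 1 homeomorphism_ident[of Kj]
      by (intro exI[of _ "\<lambda>a. a"] exI[of _ "\<lambda>a. a"] exI[of _ p]) auto
  next
    case 2
    have dj: "Kj \<inter> (B - Kj) = {}" by blast
    have U: "Kj \<union> (B - Kj) = B" using 2 by blast
    obtain f g p where fg: "homeomorphism (Kj \<union> (B - Kj)) Kj f g" "p \<in> Kj" "f p = p"
      "\<forall>x\<in>Kj \<union> (B - Kj). (\<lambda>n. (f ^^ n) x) \<longlonglongrightarrow> p"
    proof -
      have "B - Kj \<noteq> {}" using 2 by blast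
      then have cE: "cantor_set (B - Kj)" by (rule cBmK)
      show ?thesis using contract_homeo[OF cKj cE dj] that by blast
    qed
    have h: "homeomorphism B Kj f g" using fg(1) unfolding U .
    have cv: "\<forall>x\<in>Kj. (\<lambda>n. (f ^^ n) x) \<longlonglongrightarrow> p" using fg(4) by blast
    have A: "homeomorphism B Kj f g \<and> p \<in> Kj \<and> (Kj \<subset> B \<and> f p = p \<and> (\<forall>x\<in>Kj. (\<lambda>n. (f ^^ n) x) \<longlonglongrightarrow> p))"
      using h fg(2,3) cv 2 by blast
    show ?thesis by (rule exI[of _ f], rule exI[of _ g], rule exI[of _ p]) (use A in blast)
  next
    case 3
    have dj: "B \<inter> (Kj - B) = {}" by blast
    have U: "B \<union> (Kj - B) = Kj" using 3 by blast
    obtain f g p where fg: "homeomorphism (B \<union> (Kj - B)) B f g" "p \<in> B" "f p = p"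
      "\<forall>x. (\<forall>n. x \<in> (f ^^ n) ` (B \<union> (Kj - B))) \<longrightarrow> x = p"
    proof -
      have "Kj - B \<noteq> {}" using 3 by blast
      then have cE: "cantor_set (Kj - B)" by (rule cKmB)
      show ?thesis using contract_homeo[OF cB cE dj] that by blast
    qed
    have h: "homeomorphism B Kj g f" using homeomorphism_symD[OF fg(1)] unfolding U .
    have "\<forall>x\<in>B \<union> (Kj - B). g (f x) = x" using fg(1) by (simp add: homeomorphism_def)
    then have "g (f p) = p" using fg(2) by blast
    then have gp: "g p = p" using fg(3) by simp
    have tr: "\<forall>x. (\<forall>n. x \<in> (f ^^ n) ` Kj) \<longrightarrow> x = p" using fg(4) unfolding U .
    have pK: "p \<in> Kj" using fg(2) 3 by blast
    have A: "homeomorphism B Kj g f \<and> p \<in> Kj \<and> (B \<subset> Kj \<and> p \<in> B \<and> g p = p \<and> (\<forall>x. (\<forall>n. x \<in> (f ^^ n) ` Kj) \<longrightarrow> x = p))"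
      using h gp fg(2) tr 3 pK by blast
    show ?thesis by (rule exI[of _ g], rule exI[of _ f], rule exI[of _ p]) (use A in blast)
  qed
qed

theorem lemma4p1:
  fixes K :: "'a::metric_space set" and T :: "'a \<Rightarrow> 'a"
    and Ks :: "nat \<Rightarrow> 'a set" and N :: nat
  assumes "cantor_set K"
    and "\<exists>S. homeomorphism K K T S"
    and "\<And>i. i \<in> {1..N} \<Longrightarrow> cantor_set (Ks i)"
    and "\<And>i j. i \<in> {1..N} \<Longrightarrow> j \<in> {1..N} \<Longrightarrow> i \<noteq> j \<Longrightarrow> Ks i \<inter> Ks j = {}"
    and "K = (\<Union>i\<in>{1..N}. Ks i)"
    and "\<And>i. i \<in> {1..N} \<Longrightarrow>
           (\<forall>y\<in>Ks i. inv_into K T y \<in> Ks i) \<or> (\<forall>x\<in>Ks i. T x \<in> Ks i)"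
  shows "\<exists>Tt. (\<exists>S. homeomorphism K K Tt S) \<and>
           (\<forall>x\<in>K. \<forall>i\<in>{1..N}. Tt x \<in> Ks i \<longleftrightarrow> T x \<in> Ks i) \<and>
           (\<forall>x\<in>K. \<exists>p\<in>K. Tt p = p \<and> (\<lambda>n. (Tt ^^ n) x) \<longlonglongrightarrow> p)"
proof -
  note cK = assms(1) and cKs = assms(3) and dj = assms(4) and KU = assms(5) and inv = assms(6)
  define I where "I = {1..N}"
  have fI: "finite I" by (simp add: I_def)
  obtain S0 where hT: "homeomorphism K K T S0" using assms(2) by blast
  have TK: "x \<in> K \<Longrightarrow> T x \<in> K" for x using hT by (auto simp: homeomorphism_def)
  have TS: "y \<in> K \<Longrightarrow> T (S0 y) = y \<and> S0 y \<in> K" for y using hT by (auto simp: homeomorphism_def)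
  have ST: "x \<in> K \<Longrightarrow> S0 (T x) = x" for x using hT by (auto simp: homeomorphism_def)
  have cT: "continuous_on K T" using hT by (simp add: homeomorphism_def)
  have coK: "compact K" using cK by (simp add: cantor_set_def)
  have clK: "closed K" using coK by (rule compact_imp_closed)
  have KsK: "j \<in> I \<Longrightarrow> Ks j \<subseteq> K" for j using KU by (auto simp: I_def)
  have Ksne: "j \<in> I \<Longrightarrow> Ks j \<noteq> {}" for j using cKs by (simp add: cantor_set_def I_def)
  have clKs: "j \<in> I \<Longrightarrow> closed (Ks j)" for j
  proof -
    assume "j \<in> I"
    then have "compact (Ks j)" using cKs by (simp add: cantor_set_def I_def)
    then show ?thesis by (rule compact_imp_closed)
  qed
  have djI: "i \<in> I \<Longrightarrow> j \<in> I \<Longrightarrow> x \<in> Ks i \<Longrightarrow> x \<in> Ks j \<Longrightarrow> i = j" for i j x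
    using dj unfolding I_def by blast
  have inK: "x \<in> K \<Longrightarrow> \<exists>j\<in>I. x \<in> Ks j" for x using KU by (auto simp: I_def)
  define B where "B j = {x \<in> K. T x \<in> Ks j}" for j
  have BK: "B j \<subseteq> K" for j by (auto simp: B_def)
  have Bcompl: "K - B j = (\<Union>l\<in>I - {j}. B l)" if "j \<in> I" for j
  proof
    show "K - B j \<subseteq> (\<Union>l\<in>I - {j}. B l)"
    proof
      fix x assume x: "x \<in> K - B j"
      obtain l where l: "l \<in> I" "T x \<in> Ks l" using inK[OF TK] x by blast
      then have "l \<noteq> j" using x by (auto simp: B_def)
      then show "x \<in> (\<Union>l\<in>I - {j}. B l)" using l x by (auto simp: B_def)
    qed
    show "(\<Union>l\<in>I - {j}. B l) \<subseteq> K - B j"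
    proof
      fix x assume "x \<in> (\<Union>l\<in>I - {j}. B l)"
      then obtain l where l: "l \<in> I" "l \<noteq> j" "x \<in> B l" by blast
      then have "x \<notin> B j" using djI[OF l(1) that] by (auto simp: B_def)
      then show "x \<in> K - B j" using l BK by blast
    qed
  qed
  have clB: "j \<in> I \<Longrightarrow> closed (B j)" for j
  proof -
    assume j: "j \<in> I"
    have "B j = K \<inter> T -` Ks j" by (auto simp: B_def)
    then show ?thesis using continuous_closed_preimage[OF cT clK clKs[OF j]] by simp
  qed
  have clopB: "j \<in> I \<Longrightarrow> clop K (B j)" for j
  proof -
    assume j: "j \<in> I"
    have "closed (\<Union>l\<in>I - {j}. B l)" using fI clB by (intro closed_UN) auto
    then show ?thesis using Bcompl[OF j] clB[OF j] BK by (simp add: clop_def)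
  qed
  have clopKs: "j \<in> I \<Longrightarrow> clop K (Ks j)" for j
  proof -
    assume j: "j \<in> I"
    have "K - Ks j = (\<Union>l\<in>I - {j}. Ks l)"
    proof
      show "K - Ks j \<subseteq> (\<Union>l\<in>I - {j}. Ks l)" using inK by blast
      show "(\<Union>l\<in>I - {j}. Ks l) \<subseteq> K - Ks j" using KsK djI j by blast
    qed
    moreover have "closed (\<Union>l\<in>I - {j}. Ks l)" using fI clKs by (intro closed_UN) auto
    ultimately show ?thesis using clKs[OF j] KsK[OF j] by (simp add: clop_def)
  qed
  have Bne: "j \<in> I \<Longrightarrow> B j \<noteq> {}" for j
  proof -
    assume j: "j \<in> I"
    then obtain y where y: "y \<in> Ks j" using Ksne by blast
    then have "y \<in> K" using KsK j by blast
    then have "S0 y \<in> B j" using TS y by (auto simp: B_def)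
    then show ?thesis by blast
  qed
  have Bcases: "j \<in> I \<Longrightarrow> B j \<subseteq> Ks j \<or> Ks j \<subseteq> B j" for j
  proof -
    assume j: "j \<in> I"
    have "(\<forall>y\<in>Ks j. inv_into K T y \<in> Ks j) \<or> (\<forall>x\<in>Ks j. T x \<in> Ks j)"
      using inv[of j] j by (simp add: I_def)
    then show ?thesis
    proof (elim disjE)
      assume h: "\<forall>y\<in>Ks j. inv_into K T y \<in> Ks j"
      have "B j \<subseteq> Ks j"
      proof
        fix x assume x: "x \<in> B j"
        then have "inv_into K T (T x) \<in> Ks j" using h by (auto simp: B_def)
        moreover have "inj_on T K" using ST by (metis inj_on_inverseI)
        ultimately show "x \<in> Ks j" using x by (auto simp: B_def)
      qed
      then show ?thesis by blast
    next
      assume "\<forall>x\<in>Ks j. T x \<in> Ks j"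
      then have "Ks j \<subseteq> B j" using KsK[OF j] by (auto simp: B_def)
      then show ?thesis by blast
    qed
  qed
  define Spec where "Spec j h hi p \<longleftrightarrow> homeomorphism (B j) (Ks j) h hi \<and> p \<in> Ks j \<and>
     ((B j = Ks j \<and> (\<forall>x\<in>B j. h x = x)) \<or>
      (Ks j \<subset> B j \<and> h p = p \<and> (\<forall>x\<in>Ks j. (\<lambda>n. (h ^^ n) x) \<longlonglongrightarrow> p)) \<or>
      (B j \<subset> Ks j \<and> p \<in> B j \<and> h p = p \<and> (\<forall>x. (\<forall>n. x \<in> (hi ^^ n) ` Ks j) \<longrightarrow> x = p)))"
    for j and h hi :: "'a \<Rightarrow> 'a" and p
  have spec: "\<exists>h hi p. Spec j h hi p" if j: "j \<in> I" for j
    unfolding Spec_def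
  proof (rule piece_spec)
    show "cantor_set (B j)" using cantor_clop[OF cK clopB[OF j] Bne[OF j]] .
    show "cantor_set (Ks j)" using cKs j by (simp add: I_def)
    show "B j - Ks j \<noteq> {} \<Longrightarrow> cantor_set (B j - Ks j)"
      using cantor_clop[OF cK clop_Diff[OF clopB[OF j] clopKs[OF j]]] by blast
    show "Ks j - B j \<noteq> {} \<Longrightarrow> cantor_set (Ks j - B j)"
      using cantor_clop[OF cK clop_Diff[OF clopKs[OF j] clopB[OF j]]] by blast
    show "B j \<subseteq> Ks j \<or> Ks j \<subseteq> B j" using Bcases[OF j] .
  qed
  have "\<forall>j\<in>I. \<exists>t. Spec j (fst t) (fst (snd t)) (snd (snd t))"
  proof
    fix j assume "j \<in> I"
    then obtain h hi p where "Spec j h hi p" using spec by blast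
    then show "\<exists>t. Spec j (fst t) (fst (snd t)) (snd (snd t))" by (intro exI[of _ "(h, hi, p)"]) (simp only: fst_conv snd_conv)
  qed
  from bchoice[OF this] obtain F where F: "\<forall>j\<in>I. Spec j (fst (F j)) (fst (snd (F j))) (snd (snd (F j)))"
    by blast
  define h where "h j = fst (F j)" for j
  define hi where "hi j = fst (snd (F j))" for j
  define p where "p j = snd (snd (F j))" for j
  have Sp: "j \<in> I \<Longrightarrow> Spec j (h j) (hi j) (p j)" for j using F unfolding h_def hi_def p_def by blast
  have hj: "j \<in> I \<Longrightarrow> homeomorphism (B j) (Ks j) (h j) (hi j)" for j
    using Sp unfolding Spec_def by (rule conjunct1)
  have pj: "j \<in> I \<Longrightarrow> p j \<in> Ks j" for j
    using Sp unfolding Spec_def by (rule conjunct1[OF conjunct2])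
  have D: "j \<in> I \<Longrightarrow> (B j = Ks j \<and> (\<forall>x\<in>B j. h j x = x)) \<or>
      (Ks j \<subset> B j \<and> h j (p j) = p j \<and> (\<forall>x\<in>Ks j. (\<lambda>n. (h j ^^ n) x) \<longlonglongrightarrow> p j)) \<or>
      (B j \<subset> Ks j \<and> p j \<in> B j \<and> h j (p j) = p j \<and> (\<forall>x. (\<forall>n. x \<in> (hi j ^^ n) ` Ks j) \<longrightarrow> x = p j))" for j
    using Sp unfolding Spec_def by (rule conjunct2[OF conjunct2])
  have hB: "h j x \<in> Ks j \<and> hi j (h j x) = x" if "j \<in> I" "x \<in> B j" for j x
    using hj[OF that(1)] that(2) unfolding homeomorphism_def by blast
  have hiK: "hi j y \<in> B j \<and> h j (hi j y) = y" if "j \<in> I" "y \<in> Ks j" for j y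
    using hj[OF that(1)] that(2) unfolding homeomorphism_def by blast
  have hcont: "continuous_on (B j) (h j)" if "j \<in> I" for j using hj[OF that] unfolding homeomorphism_def by blast
  have Bcov: "x \<in> K \<Longrightarrow> \<exists>j\<in>I. x \<in> B j" for x using inK[OF TK] by (auto simp: B_def)
  have Buniq: "i \<in> I \<Longrightarrow> j \<in> I \<Longrightarrow> x \<in> B i \<Longrightarrow> x \<in> B j \<Longrightarrow> i = j" for i j x
    using djI by (auto simp: B_def)
  define idx where "idx x = (THE j. j \<in> I \<and> x \<in> B j)" for x
  have idx: "j \<in> I \<Longrightarrow> x \<in> B j \<Longrightarrow> idx x = j" for j x
    unfolding idx_def by (rule the_equality) (use Buniq in blast)+
  define Tt where "Tt x = h (idx x) x" for x
  have TtB: "j \<in> I \<Longrightarrow> x \<in> B j \<Longrightarrow> Tt x = h j x" for j x by (simp add: Tt_def idx)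
  have TtKs: "j \<in> I \<Longrightarrow> x \<in> B j \<Longrightarrow> Tt x \<in> Ks j" for j x using TtB hB by simp
  have TtK: "x \<in> K \<Longrightarrow> Tt x \<in> K" for x using Bcov TtKs KsK by blast
  have KB: "K = (\<Union>j\<in>I. B j)" using Bcov BK by blast
  have hom: "\<exists>S. homeomorphism K K Tt S"
  proof (rule homeomorphism_compact[OF coK])
    have "continuous_on (\<Union>j\<in>I. B j) Tt"
    proof (rule continuous_on_closed_Union[OF fI])
      fix j assume j: "j \<in> I"
      show "closed (B j)" using clB[OF j] .
      show "continuous_on (B j) Tt" using hcont[OF j] by (rule continuous_on_eq) (use TtB j in simp)
    qed
    then show "continuous_on K Tt" using KB by simp
    show "Tt ` K = K"
    proof
      show "Tt ` K \<subseteq> K" using TtK by blast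
      show "K \<subseteq> Tt ` K"
      proof
        fix y assume "y \<in> K"
        then obtain j where j: "j \<in> I" "y \<in> Ks j" using inK by blast
        then have "hi j y \<in> B j" "Tt (hi j y) = y" using hiK TtB by auto
        then show "y \<in> Tt ` K" using BK[of j] by (metis image_eqI subsetD)
      qed
    qed
    show "inj_on Tt K"
    proof (rule inj_onI)
      fix x y assume xy: "x \<in> K" "y \<in> K" "Tt x = Tt y"
      obtain i where i: "i \<in> I" "x \<in> B i" using Bcov xy by blast
      obtain j where j: "j \<in> I" "y \<in> B j" using Bcov xy by blast
      have "i = j" using djI[OF i(1) j(1)] TtKs[OF i] TtKs[OF j] xy(3) by simp
      then show "x = y" using hB[OF i] hB[OF j] TtB[OF i] TtB[OF j] xy(3) by metis
    qed
  qed
  have trans: "\<forall>x\<in>K. \<forall>i\<in>{1..N}. Tt x \<in> Ks i \<longleftrightarrow> T x \<in> Ks i"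
  proof (intro ballI)
    fix x i assume x: "x \<in> K" and i: "i \<in> {1..N}"
    obtain j where j: "j \<in> I" "x \<in> B j" using Bcov x by blast
    have a: "Tt x \<in> Ks j" "T x \<in> Ks j" using TtKs[OF j] j by (auto simp: B_def)
    show "Tt x \<in> Ks i \<longleftrightarrow> T x \<in> Ks i" using djI[of i j] a i j(1) unfolding I_def by blast
  qed
  have C1: "\<exists>q\<in>K. Tt q = q \<and> (\<lambda>n. (Tt ^^ n) x) \<longlonglongrightarrow> q"
    if j: "j \<in> I" and sub: "Ks j \<subseteq> B j" and x: "x \<in> Ks j" for j x
  proof -
    have it: "(Tt ^^ n) x = (h j ^^ n) x \<and> (Tt ^^ n) x \<in> Ks j" for n
    proof (induction n)
      case 0 then show ?case using x by simp
    next
      case (Suc n)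
      then have "(Tt ^^ n) x \<in> B j" using sub by blast
      then show ?case using Suc TtB[OF j] TtKs[OF j] by simp
    qed
    consider "B j = Ks j \<and> (\<forall>x\<in>B j. h j x = x)"
      | "Ks j \<subset> B j \<and> h j (p j) = p j \<and> (\<forall>x\<in>Ks j. (\<lambda>n. (h j ^^ n) x) \<longlonglongrightarrow> p j)"
      using D[OF j] sub by blast
    then show ?thesis
    proof cases
      case 1
      have "(h j ^^ n) x = x" for n
        by (induction n) (use 1 x in auto)
      then have "(Tt ^^ n) x = x" for n using it by simp
      moreover have "Tt x = x" using it[of 1] \<open>(h j ^^ 1) x = x\<close> by simp
      ultimately show ?thesis using x KsK[OF j] by auto
    next
      case 2
      have "Tt (p j) = p j" using TtB[OF j] 2 pj[OF j] sub by auto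
      moreover have "(\<lambda>n. (Tt ^^ n) x) \<longlonglongrightarrow> p j" using 2 x it by simp
      moreover have "p j \<in> K" using pj[OF j] KsK[OF j] by blast
      ultimately show ?thesis by blast
    qed
  qed
  have orb: "\<exists>q\<in>K. Tt q = q \<and> (\<lambda>n. (Tt ^^ n) x) \<longlonglongrightarrow> q" if x: "x \<in> K" for x
  proof -
    obtain j where j: "j \<in> I" "x \<in> Ks j" using inK x by blast
    show ?thesis
    proof (cases "Ks j \<subseteq> B j")
      case True
      then show ?thesis using C1 j by blast
    next
      case False
      then have D3: "B j \<subset> Ks j \<and> p j \<in> B j \<and> h j (p j) = p j \<and> (\<forall>x. (\<forall>n. x \<in> (hi j ^^ n) ` Ks j) \<longrightarrow> x = p j)"
        using D[OF j(1)] by blast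
      have pfix: "Tt (p j) = p j" using D3 TtB[OF j(1)] by simp
      have pK: "p j \<in> K" using pj[OF j(1)] KsK[OF j(1)] by blast
      show ?thesis
      proof (cases "\<forall>n. (Tt ^^ n) x \<in> B j")
        case True
        have it: "x = (hi j ^^ n) ((Tt ^^ n) x) \<and> (Tt ^^ n) x \<in> Ks j" for n
        proof (induction n)
          case 0 then show ?case using j by simp
        next
          case (Suc n)
          let ?y = "(Tt ^^ n) x"
          have y: "?y \<in> B j" using True by blast
          have e1: "(Tt ^^ Suc n) x = h j ?y" using TtB[OF j(1) y] by simp
          have e2: "(hi j ^^ Suc n) (h j ?y) = (hi j ^^ n) (hi j (h j ?y))"
            by (simp only: funpow_Suc_right o_apply)
          have e3: "hi j (h j ?y) = ?y" "h j ?y \<in> Ks j" using hB[OF j(1) y] by auto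
          show ?case using Suc.IH e1 e2 e3 by simp
        qed
        have "\<forall>n. x \<in> (hi j ^^ n) ` Ks j" using it by blast
        then have "x = p j" using D3 by blast
        moreover have "(Tt ^^ n) (p j) = p j" for n by (induction n) (use pfix in auto)
        ultimately show ?thesis using pfix pK by auto
      next
        case False
        then have ex: "\<exists>n. (Tt ^^ n) x \<notin> B j" by blast
        define m where "m = (LEAST n. (Tt ^^ n) x \<notin> B j)"
        have m1: "(Tt ^^ m) x \<notin> B j" unfolding m_def using LeastI_ex[OF ex] .
        have m2: "k < m \<Longrightarrow> (Tt ^^ k) x \<in> B j" for k unfolding m_def using not_less_Least by blast
        have inKs: "k \<le> m \<Longrightarrow> (Tt ^^ k) x \<in> Ks j" for k
        proof (induction k)
          case 0 then show ?case using j by simp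
        next
          case (Suc k)
          then have "(Tt ^^ k) x \<in> B j" using m2 by simp
          then show ?case using TtKs[OF j(1)] by simp
        qed
        let ?z = "(Tt ^^ m) x"
        have zK: "?z \<in> Ks j" using inKs by simp
        then have "?z \<in> K" using KsK[OF j(1)] by blast
        then obtain l where l: "l \<in> I" "?z \<in> B l" using Bcov by blast
        have "l \<noteq> j" using l m1 by blast
        have "\<not> B l \<subseteq> Ks l"
        proof
          assume "B l \<subseteq> Ks l"
          then have "?z \<in> Ks l" using l by blast
          then show False using djI[OF l(1) j(1) _ zK] \<open>l \<noteq> j\<close> by blast
        qed
        then have subl: "Ks l \<subseteq> B l" using Bcases[OF l(1)] by blast
        let ?w = "Tt ?z"
        have wK: "?w \<in> Ks l" using TtKs[OF l] .
        obtain q where q: "q \<in> K" "Tt q = q" "(\<lambda>n. (Tt ^^ n) ?w) \<longlonglongrightarrow> q" using C1[OF l(1) subl wK] by blast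
        have "(Tt ^^ (n + Suc m)) x = (Tt ^^ n) ?w" for n
          by (simp only: funpow_add funpow.simps(2) o_apply)
        then have "(\<lambda>n. (Tt ^^ (n + Suc m)) x) \<longlonglongrightarrow> q" using q(3) by simp
        then have "(\<lambda>n. (Tt ^^ n) x) \<longlonglongrightarrow> q" by (rule LIMSEQ_offset)
        then show ?thesis using q by blast
      qed
    qed
  qed
  show ?thesis using hom trans orb by blast
qed

end
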